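(* Let $U$ be a nonempty finite set, $R\subseteq U\times U$ serial and transitive, $h$ the height function of $(Reg(U,R),\subseteq)$, and let $M(Reg(U,R))$ be the matroid on $U$ whose independent sets are $\mathbf{I}(Reg(U,R);h)$, with rank function $r$. Then for every $X\subseteq U$, $$r(X)=\min_{Y\in Reg(U,R)}\{h(Y)+|X\setminus Y|\}.$$
   Context: $R_s(x)=\{y\in U\mid xRy\}$; $\underline{R}(X)=\{x\mid R_s(x)\subseteq X\}$, $\overline{R}(X)=\{x\mid R_s(x)\cap X\neq\emptyset\}$; $X$ is regular if $X=\underline{R}(\overline{R}(X))$, and $Reg(U,R)$ is the lattice of regular sets under inclusion, with least element $\emptyset$. $h(A)$ is the length of a maximal chain in $[\emptyset,A]$. $\mathbf{I}(Reg(U,R);h)=\{X\subseteq U\mid h(Y)\ge|X\cap Y|\ \forall Y\in Reg(U,R)\}$. The rank function of a matroid is $r(X)=\max\{|I|\mid I\subseteq X,\ I\text{ independent}\}$. *)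

theory Defs
  imports Main
begin

definition serial_on :: "'a set \<Rightarrow> ('a \<times> 'a) set \<Rightarrow> bool" where
  "serial_on U R \<longleftrightarrow> (\<forall>x\<in>U. \<exists>y\<in>U. (x, y) \<in> R)"

definition succ_nbhd :: "'a set \<Rightarrow> ('a \<times> 'a) set \<Rightarrow> 'a \<Rightarrow> 'a set" where
  "succ_nbhd U R x = {y \<in> U. (x, y) \<in> R}"

definition lower_approx :: "'a set \<Rightarrow> ('a \<times> 'a) set \<Rightarrow> 'a set \<Rightarrow> 'a set" where
  "lower_approx U R X = {x \<in> U. succ_nbhd U R x \<subseteq> X}"

definition upper_approx :: "'a set \<Rightarrow> ('a \<times> 'a) set \<Rightarrow> 'a set \<Rightarrow> 'a set" where
  "upper_approx U R X = {x \<in> U. succ_nbhd U R x \<inter> X \<noteq> {}}"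

definition Reg :: "'a set \<Rightarrow> ('a \<times> 'a) set \<Rightarrow> 'a set set" where
  "Reg U R = {X. X \<subseteq> U \<and> X = lower_approx U R (upper_approx U R X)}"

definition reg_chain_below :: "'a set \<Rightarrow> ('a \<times> 'a) set \<Rightarrow> 'a set \<Rightarrow> 'a set set \<Rightarrow> bool" where
  "reg_chain_below U R A C \<longleftrightarrow> C \<subseteq> Reg U R \<and> (\<forall>Y\<in>C. Y \<subseteq> A)
     \<and> (\<forall>Y1\<in>C. \<forall>Y2\<in>C. Y1 \<subseteq> Y2 \<or> Y2 \<subseteq> Y1)"

definition reg_height :: "'a set \<Rightarrow> ('a \<times> 'a) set \<Rightarrow> 'a set \<Rightarrow> nat" where
  "reg_height U R A = Max {card C - 1 | C. reg_chain_below U R A C}"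

definition reg_indep :: "'a set \<Rightarrow> ('a \<times> 'a) set \<Rightarrow> 'a set set" where
  "reg_indep U R = {X. X \<subseteq> U \<and> (\<forall>Y\<in>Reg U R. card (X \<inter> Y) \<le> reg_height U R Y)}"

definition reg_rank :: "'a set \<Rightarrow> ('a \<times> 'a) set \<Rightarrow> 'a set \<Rightarrow> nat" where
  "reg_rank U R X = Max {card I | I. I \<subseteq> X \<and> I \<in> reg_indep U R}"

end

theory Submission
  imports Defs
begin

locale ctx =
  fixes U :: "'a set" and R :: "('a \<times> 'a) set"
  assumes finU: "finite U" and RU: "R \<subseteq> U \<times> U"
    and ser: "serial_on U R" and tr: "trans R"
begin

definition Rs where "Rs x = succ_nbhd U R x"
definition Term where "Term = {t\<in>U. \<forall>z. (t,z)\<in>R \<longrightarrow> (z,t)\<in>R}"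
definition K where "K Y = Rs ` (Y \<inter> Term)"
definition D where "D Y \<longleftrightarrow> Y \<subseteq> U \<and> (\<forall>x\<in>U. x\<in>Y \<longleftrightarrow> (\<forall>t\<in>Term. (x,t)\<in>R \<longrightarrow> t\<in>Y))"

lemma Rs_eq: "Rs x = {y. (x,y)\<in>R}"
  using RU by (auto simp: Rs_def succ_nbhd_def)

lemma trE: "(x,y)\<in>R \<Longrightarrow> (y,z)\<in>R \<Longrightarrow> (x,z)\<in>R"
  using tr by (meson transE)

lemma serE: "x\<in>U \<Longrightarrow> \<exists>y. (x,y)\<in>R"
  using ser by (auto simp: serial_on_def)

lemma inU: "(x,y)\<in>R \<Longrightarrow> x\<in>U \<and> y\<in>U" using RU by auto

lemma term_refl: "t\<in>Term \<Longrightarrow> (t,t)\<in>R"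
  unfolding Term_def using serE trE by blast

lemma term_succ: assumes "t\<in>Term" "(t,s)\<in>R" shows "s\<in>Term" "(s,t)\<in>R" "Rs s = Rs t"
proof -
  show st: "(s,t)\<in>R" using assms by (auto simp: Term_def)
  have "s\<in>U" using assms(2) inU by blast
  moreover have "(z,s)\<in>R" if "(s,z)\<in>R" for z
  proof -
    have "(t,z)\<in>R" using trE[OF assms(2) that] .
    then have "(z,t)\<in>R" using assms(1) by (auto simp: Term_def)
    then show ?thesis using trE[OF _ assms(2)] by blast
  qed
  ultimately show "s\<in>Term" by (auto simp: Term_def)
  show "Rs s = Rs t" by (auto simp: Rs_eq intro: trE[OF assms(2)] trE[OF st])
qed

lemma finRs: "finite (Rs x)"
  using finU RU by (auto simp: Rs_def succ_nbhd_def)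

lemma exists_term: assumes "x\<in>U" shows "\<exists>t\<in>Term. (x,t)\<in>R"
proof -
  obtain y0 where "(x,y0)\<in>R" using serE assms by blast
  then obtain y where y: "(x,y)\<in>R" and ymin: "\<And>z. (x,z)\<in>R \<Longrightarrow> card (Rs y) \<le> card (Rs z)"
    using ex_has_least_nat[of "\<lambda>z. (x,z)\<in>R" y0 "\<lambda>z. card (Rs z)"] by blast
  have eq: "Rs z = Rs y" if "(y,z)\<in>R" for z
  proof -
    have sub: "Rs z \<subseteq> Rs y"
    proof
      fix w assume "w \<in> Rs z" then have "(z,w)\<in>R" by (simp add: Rs_eq)
      then have "(y,w)\<in>R" by (rule trE[OF that])
      then show "w \<in> Rs y" by (simp add: Rs_eq)
    qed
    have "card (Rs y) \<le> card (Rs z)" by (rule ymin, rule trE[OF y that])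
    then have "card (Rs z) = card (Rs y)" using card_mono[OF finRs sub] by simp
    then show ?thesis by (rule card_subset_eq[OF finRs sub])
  qed
  obtain z where yz: "(y,z)\<in>R" using serE[OF conjunct2[OF inU[OF y]]] by blast
  have "z\<in>Term"
  proof -
    have zU: "z\<in>U" using conjunct2[OF inU[OF yz]] .
    have "(w,z)\<in>R" if zw: "(z,w)\<in>R" for w
    proof -
      have "w \<in> Rs z" using zw by (simp add: Rs_eq)
      then have "w \<in> Rs y" by (simp only: eq[OF yz])
      then have "(y,w)\<in>R" by (simp add: Rs_eq)
      then have e: "Rs w = Rs y" by (rule eq)
      have "z \<in> Rs y" using yz by (simp add: Rs_eq)
      then have "z \<in> Rs w" by (simp only: e)
      then show ?thesis by (simp add: Rs_eq)
    qed
    with zU show ?thesis unfolding Term_def by blast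
  qed
  moreover have "(x,z)\<in>R" using trE[OF y yz] .
  ultimately show ?thesis by blast
qed

lemma lu: "lower_approx U R (upper_approx U R Y) = {x\<in>U. \<forall>t\<in>Term. (x,t)\<in>R \<longrightarrow> Rs t \<inter> Y \<noteq> {}}"
proof (rule set_eqI, rule iffI)
  fix x assume "x \<in> lower_approx U R (upper_approx U R Y)"
  then have x: "x\<in>U" "\<And>y. (x,y)\<in>R \<Longrightarrow> Rs y \<inter> Y \<noteq> {}"
    using inU by (auto simp: lower_approx_def upper_approx_def Rs_def succ_nbhd_def)
  then show "x \<in> {x\<in>U. \<forall>t\<in>Term. (x,t)\<in>R \<longrightarrow> Rs t \<inter> Y \<noteq> {}}" by blast
next
  fix x assume x: "x \<in> {x\<in>U. \<forall>t\<in>Term. (x,t)\<in>R \<longrightarrow> Rs t \<inter> Y \<noteq> {}}"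
  have "Rs y \<inter> Y \<noteq> {}" if xy: "(x,y)\<in>R" for y
  proof -
    obtain t where t: "t\<in>Term" "(y,t)\<in>R" using exists_term conjunct2[OF inU[OF xy]] by blast
    then have "(x,t)\<in>R" using trE[OF xy] by blast
    then have "Rs t \<inter> Y \<noteq> {}" using x t by blast
    moreover have "Rs t \<subseteq> Rs y" by (auto simp: Rs_eq intro: trE[OF t(2)])
    ultimately show ?thesis by blast
  qed
  then show "x \<in> lower_approx U R (upper_approx U R Y)"
    using x inU by (auto simp: lower_approx_def upper_approx_def Rs_def succ_nbhd_def)
qed

lemma D_inv: assumes "D Y" "t\<in>Term" "t\<in>Y" "(t,s)\<in>R" shows "s\<in>Y"
proof -
  have tU: "t\<in>U" using assms(4) inU by blast
  have sU: "s\<in>U" using assms(4) inU by blast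
  have "\<forall>t'\<in>Term. (t,t')\<in>R \<longrightarrow> t'\<in>Y" using assms(1,3) tU by (auto simp: D_def)
  then have "\<forall>t'\<in>Term. (s,t')\<in>R \<longrightarrow> t'\<in>Y" using trE[OF assms(4)] by blast
  then show ?thesis using assms(1) sU by (auto simp: D_def)
qed

lemma D_term: assumes "D Y" "t\<in>Term" shows "t\<in>Y \<longleftrightarrow> Rs t \<inter> Y \<noteq> {}"
proof
  assume "t\<in>Y" then show "Rs t \<inter> Y \<noteq> {}" using term_refl[OF assms(2)] by (auto simp: Rs_eq)
next
  assume "Rs t \<inter> Y \<noteq> {}"
  then obtain s where s: "(t,s)\<in>R" "s\<in>Y" by (auto simp: Rs_eq)
  show "t\<in>Y" using D_inv[OF assms(1) term_succ(1)[OF assms(2) s(1)] s(2) term_succ(2)[OF assms(2) s(1)]] .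
qed

lemma reg_iff: "Y \<in> Reg U R \<longleftrightarrow> D Y"
proof
  assume "Y \<in> Reg U R"
  then have Y0: "Y \<subseteq> U \<and> Y = lower_approx U R (upper_approx U R Y)"
    unfolding Reg_def by (rule CollectD)
  have Y1: "Y \<subseteq> U \<and> Y = {x\<in>U. \<forall>t\<in>Term. (x,t)\<in>R \<longrightarrow> Rs t \<inter> Y \<noteq> {}}"
    using Y0 unfolding lu .
  have Ysub: "Y \<subseteq> U" using Y1 by (rule conjunct1)
  have Yeq: "Y = {x\<in>U. \<forall>t\<in>Term. (x,t)\<in>R \<longrightarrow> Rs t \<inter> Y \<noteq> {}}"
    using Y1 by (rule conjunct2)
  have mem: "x\<in>Y \<longleftrightarrow> x\<in>U \<and> (\<forall>t\<in>Term. (x,t)\<in>R \<longrightarrow> Rs t \<inter> Y \<noteq> {})" for x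
    using eqset_imp_iff[OF Yeq, of x] by (simp only: mem_Collect_eq)
  have tm: "t\<in>Y \<longleftrightarrow> Rs t \<inter> Y \<noteq> {}" if t: "t\<in>Term" for t
  proof
    assume tY: "t\<in>Y"
    have "t \<in> Rs t" using term_refl[OF t] by (simp add: Rs_eq)
    with tY show "Rs t \<inter> Y \<noteq> {}" by blast
  next
    assume a: "Rs t \<inter> Y \<noteq> {}"
    have tU: "t\<in>U" using t by (simp add: Term_def)
    have "\<forall>t'\<in>Term. (t,t')\<in>R \<longrightarrow> Rs t' \<inter> Y \<noteq> {}"
    proof (intro ballI impI)
      fix t' assume "t'\<in>Term" "(t,t')\<in>R"
      then have "Rs t' = Rs t" using term_succ(3)[OF t] by blast
      then show "Rs t' \<inter> Y \<noteq> {}" using a by simp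
    qed
    then show "t\<in>Y" using mem[of t] tU by (simp only: simp_thms)
  qed
  show "D Y" unfolding D_def
  proof (intro conjI ballI)
    show "Y \<subseteq> U" by (rule Ysub)
    fix x assume xU: "x\<in>U"
    have "(\<forall>t\<in>Term. (x,t)\<in>R \<longrightarrow> t\<in>Y) \<longleftrightarrow> (\<forall>t\<in>Term. (x,t)\<in>R \<longrightarrow> Rs t \<inter> Y \<noteq> {})"
    proof (rule ball_cong[OF refl])
      fix t assume "t\<in>Term" then show "((x,t)\<in>R \<longrightarrow> t\<in>Y) \<longleftrightarrow> ((x,t)\<in>R \<longrightarrow> Rs t \<inter> Y \<noteq> {})"
        using tm by (simp only:)
    qed
    then show "x\<in>Y \<longleftrightarrow> (\<forall>t\<in>Term. (x,t)\<in>R \<longrightarrow> t\<in>Y)"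
      using mem[of x] xU by (simp only: simp_thms)
  qed
next
  assume d: "D Y"
  have Ysub: "Y \<subseteq> U" using d by (simp add: D_def)
  have "Y = {x\<in>U. \<forall>t\<in>Term. (x,t)\<in>R \<longrightarrow> Rs t \<inter> Y \<noteq> {}}"
  proof (rule set_eqI)
    fix x
    have m1: "x\<in>Y \<longleftrightarrow> x\<in>U \<and> (\<forall>t\<in>Term. (x,t)\<in>R \<longrightarrow> t\<in>Y)"
    proof (cases "x\<in>U")
      case True then show ?thesis using d unfolding D_def by simp
    next
      case False then show ?thesis using Ysub by blast
    qed
    have "(\<forall>t\<in>Term. (x,t)\<in>R \<longrightarrow> t\<in>Y) \<longleftrightarrow> (\<forall>t\<in>Term. (x,t)\<in>R \<longrightarrow> Rs t \<inter> Y \<noteq> {})"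
    proof (rule ball_cong[OF refl])
      fix t assume "t\<in>Term" then show "((x,t)\<in>R \<longrightarrow> t\<in>Y) \<longleftrightarrow> ((x,t)\<in>R \<longrightarrow> Rs t \<inter> Y \<noteq> {})"
        using D_term[OF d] by (simp only:)
    qed
    with m1 show "x\<in>Y \<longleftrightarrow> x\<in>{x\<in>U. \<forall>t\<in>Term. (x,t)\<in>R \<longrightarrow> Rs t \<inter> Y \<noteq> {}}"
      by (simp only: mem_Collect_eq)
  qed
  with Ysub show "Y \<in> Reg U R" unfolding Reg_def lu by (intro CollectI conjI)
qed

lemma D_sub: "D Y \<Longrightarrow> Y \<subseteq> U" by (simp add: D_def)
lemma D_mem: "D Y \<Longrightarrow> x\<in>U \<Longrightarrow> x\<in>Y \<longleftrightarrow> (\<forall>t\<in>Term. (x,t)\<in>R \<longrightarrow> t\<in>Y)" by (simp add: D_def)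

lemma finTerm: "finite Term"
  using finU by (rule finite_subset[rotated]) (auto simp: Term_def)

lemma finK: "finite (K Y)"
  unfolding K_def using finTerm by simp

lemma K_mono: "Y \<subseteq> Z \<Longrightarrow> K Y \<subseteq> K Z" unfolding K_def by blast

lemma K_strict: assumes "D Y" "D Z" "Y \<subset> Z" shows "card (K Y) < card (K Z)"
proof -
  obtain x where x: "x\<in>Z" "x\<notin>Y" using assms(3) by blast
  have xU: "x\<in>U" using x(1) D_sub[OF assms(2)] by blast
  obtain t where t: "t\<in>Term" "(x,t)\<in>R" "t\<notin>Y" using x(2) D_mem[OF assms(1) xU] by blast
  have tZ: "t\<in>Z" using x(1) D_mem[OF assms(2) xU] t by blast
  have "Rs t \<notin> K Y"
  proof
    assume "Rs t \<in> K Y"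
    then obtain s where s: "s\<in>Y" "s\<in>Term" "Rs t = Rs s" unfolding K_def by blast
    have "t\<in>Rs t" using term_refl[OF t(1)] by (simp add: Rs_eq)
    then have "t\<in>Rs s" using s(3) by simp
    then have "(s,t)\<in>R" by (simp add: Rs_eq)
    then have "t\<in>Y" by (rule D_inv[OF assms(1) s(2) s(1)])
    with t(3) show False by blast
  qed
  moreover have "Rs t \<in> K Z" using tZ t(1) unfolding K_def by blast
  ultimately have "K Y \<subset> K Z" using K_mono[of Y Z] assms(3) by blast
  then show ?thesis by (rule psubset_card_mono[OF finK])
qed

lemma chain_bound: assumes "reg_chain_below U R A C" "D A" shows "card C \<le> card (K A) + 1"
proof -
  have CR: "C \<subseteq> Reg U R" and CA: "\<forall>Y\<in>C. Y \<subseteq> A"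
    using assms(1) unfolding reg_chain_below_def by (rule conjunct1, blast)
  have C: "D Y \<and> Y \<subseteq> A" if "Y\<in>C" for Y
  proof
    have "Y \<in> Reg U R" using CR that by (rule subsetD)
    then show "D Y" by (simp only: reg_iff)
    show "Y \<subseteq> A" using CA that by (rule bspec)
  qed
  have cmp: "\<And>Y1 Y2. Y1\<in>C \<Longrightarrow> Y2\<in>C \<Longrightarrow> Y1 \<subseteq> Y2 \<or> Y2 \<subseteq> Y1"
    using assms(1) unfolding reg_chain_below_def by blast
  have inj: "inj_on (\<lambda>Y. card (K Y)) C"
  proof (rule inj_onI)
    fix Y1 Y2 assume a: "Y1\<in>C" "Y2\<in>C" "card (K Y1) = card (K Y2)"
    have D1: "D Y1" using C[OF a(1)] by blast
    have D2: "D Y2" using C[OF a(2)] by blast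
    show "Y1 = Y2"
    proof (rule ccontr)
      assume ne: "Y1 \<noteq> Y2"
      from cmp[OF a(1) a(2)] show False
      proof
        assume "Y1 \<subseteq> Y2" then have "Y1 \<subset> Y2" using ne by blast
        then have "card (K Y1) < card (K Y2)" by (rule K_strict[OF D1 D2])
        with a(3) show False by simp
      next
        assume "Y2 \<subseteq> Y1" then have "Y2 \<subset> Y1" using ne by blast
        then have "card (K Y2) < card (K Y1)" by (rule K_strict[OF D2 D1])
        with a(3) show False by simp
      qed
    qed
  qed
  have "(\<lambda>Y. card (K Y)) ` C \<subseteq> {0..card (K A)}"
  proof
    fix m assume "m \<in> (\<lambda>Y. card (K Y)) ` C"
    then obtain Y where Y: "Y\<in>C" "m = card (K Y)" by blast
    have "K Y \<subseteq> K A" using C[OF Y(1)] by (intro K_mono) (rule conjunct2)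
    then have "card (K Y) \<le> card (K A)" by (rule card_mono[OF finK])
    then show "m \<in> {0..card (K A)}" using Y(2) by simp
  qed
  then have "card C \<le> card {0..card (K A)}" by (rule card_inj_on_le[OF inj _ finite_atLeastAtMost])
  then show ?thesis by simp
qed

lemma chain_exists: "D A \<Longrightarrow> card (K A) = n \<Longrightarrow> \<exists>C. reg_chain_below U R A C \<and> A \<in> C \<and> card C = n + 1"
proof (induction n arbitrary: A)
  case 0
  have "K A = {}" using 0(2) finK by simp
  then have AT: "A \<inter> Term = {}" unfolding K_def by simp
  have "A = {}"
  proof (rule ccontr)
    assume "A \<noteq> {}" then obtain x where x: "x\<in>A" by blast
    have xU: "x\<in>U" using x D_sub[OF 0(1)] by blast
    obtain t where t: "t\<in>Term" "(x,t)\<in>R" using exists_term[OF xU] by blast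
    have "t\<in>A" using D_mem[OF 0(1) xU] x t by blast
    with t(1) AT show False by blast
  qed
  have "A \<in> Reg U R" using 0(1) by (simp only: reg_iff)
  then have "reg_chain_below U R A {A}" unfolding reg_chain_below_def by blast
  then show ?case by (intro exI[of _ "{A}"]) simp
next
  case (Suc n)
  have "K A \<noteq> {}" using Suc.prems(2) by auto
  then obtain t0 where t0: "t0 \<in> A" "t0\<in>Term" unfolding K_def by blast
  define A' where "A' = {x\<in>U. \<forall>t\<in>Term. (x,t)\<in>R \<longrightarrow> t\<in>A \<and> Rs t \<noteq> Rs t0}"
  have A'U: "A' \<subseteq> U" unfolding A'_def by blast
  have A'mem: "x\<in>A' \<longleftrightarrow> (\<forall>t\<in>Term. (x,t)\<in>R \<longrightarrow> t\<in>A')" if xU: "x\<in>U" for x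
  proof
    assume xA: "x\<in>A'"
    show "\<forall>t\<in>Term. (x,t)\<in>R \<longrightarrow> t\<in>A'"
    proof (intro ballI impI)
      fix t assume t: "t\<in>Term" "(x,t)\<in>R"
      have tU: "t\<in>U" using t(1) by (simp add: Term_def)
      have "t'\<in>A \<and> Rs t' \<noteq> Rs t0" if "t'\<in>Term" "(t,t')\<in>R" for t'
        using xA trE[OF t(2) that(2)] that(1) unfolding A'_def by blast
      then show "t\<in>A'" using tU unfolding A'_def by blast
    qed
  next
    assume h: "\<forall>t\<in>Term. (x,t)\<in>R \<longrightarrow> t\<in>A'"
    have "t\<in>A \<and> Rs t \<noteq> Rs t0" if "t\<in>Term" "(x,t)\<in>R" for t
    proof -
      have "t\<in>A'" using h that by blast
      then show ?thesis using that(1) term_refl[OF that(1)] unfolding A'_def by blast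
    qed
    then show "x\<in>A'" using xU unfolding A'_def by blast
  qed
  have DA': "D A'" unfolding D_def using A'U A'mem by blast
  have A'A: "A' \<subseteq> A"
  proof
    fix x assume x: "x\<in>A'"
    have xU: "x\<in>U" using x A'U by blast
    have "\<forall>t\<in>Term. (x,t)\<in>R \<longrightarrow> t\<in>A" using x unfolding A'_def by blast
    then show "x\<in>A" using D_mem[OF Suc.prems(1) xU] by blast
  qed
  have KA': "K A' = K A - {Rs t0}"
  proof -
    have eq: "A' \<inter> Term = {t \<in> A \<inter> Term. Rs t \<noteq> Rs t0}"
    proof (rule set_eqI, rule iffI)
      fix t assume "t \<in> A' \<inter> Term"
      then show "t \<in> {t \<in> A \<inter> Term. Rs t \<noteq> Rs t0}" using term_refl unfolding A'_def by blast
    next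
      fix t assume t: "t \<in> {t \<in> A \<inter> Term. Rs t \<noteq> Rs t0}"
      have tU: "t\<in>U" using t by (simp add: Term_def)
      have "t'\<in>A \<and> Rs t' \<noteq> Rs t0" if "t'\<in>Term" "(t,t')\<in>R" for t'
      proof -
        have "t\<in>A" "t\<in>Term" "Rs t \<noteq> Rs t0" using t by auto
        then show ?thesis using D_inv[OF Suc.prems(1) _ _ that(2)] term_succ(3)[OF _ that(2)] by simp
      qed
      then show "t\<in>A'\<inter>Term" using tU t unfolding A'_def by blast
    qed
    show ?thesis unfolding K_def eq by auto
  qed
  have t0K: "Rs t0 \<in> K A" using t0 unfolding K_def by blast
  then have "card (K A') = n" using KA' Suc.prems(2) finK by simp
  then obtain C' where C': "reg_chain_below U R A' C'" "A'\<in>C'" "card C' = n+1"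
    using Suc.IH[OF DA'] by blast
  have AC': "A \<notin> C'"
  proof
    assume "A\<in>C'" then have "A \<subseteq> A'" using C'(1) unfolding reg_chain_below_def by blast
    then have "K A \<subseteq> K A'" by (rule K_mono)
    with t0K KA' show False by blast
  qed
  have finC': "finite C'" by (rule card_ge_0_finite) (simp add: C'(3))
  have "A \<in> Reg U R" using Suc.prems(1) by (simp only: reg_iff)
  then have c1: "insert A C' \<subseteq> Reg U R"
    using C'(1) unfolding reg_chain_below_def by blast
  have c2: "\<forall>Y\<in>insert A C'. Y \<subseteq> A"
    using C'(1) A'A unfolding reg_chain_below_def by blast
  have c3: "\<forall>Y1\<in>insert A C'. \<forall>Y2\<in>insert A C'. Y1 \<subseteq> Y2 \<or> Y2 \<subseteq> Y1"
    using C'(1) c2 unfolding reg_chain_below_def by blast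
  have "reg_chain_below U R A (insert A C')"
    unfolding reg_chain_below_def using c1 c2 c3 by blast
  then show ?case using AC' finC' C'(3) by (intro exI[of _ "insert A C'"]) simp
qed

lemma height: assumes "D A" shows "reg_height U R A = card (K A)"
proof -
  let ?S = "{card C - 1 | C. reg_chain_below U R A C}"
  have bound: "m \<le> card (K A)" if m: "m \<in> ?S" for m
  proof -
    obtain C where "m = card C - 1" "reg_chain_below U R A C" using m by blast
    then show ?thesis using chain_bound[OF _ assms, of C] by simp
  qed
  have sub: "?S \<subseteq> {0..card (K A)}"
  proof
    fix m assume "m \<in> ?S"
    from bound[OF this] show "m \<in> {0..card (K A)}" by simp
  qed
  have fin: "finite ?S" by (rule finite_subset[OF sub finite_atLeastAtMost])
  obtain C where "reg_chain_below U R A C" "card C = card (K A) + 1"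
    using chain_exists[OF assms refl] by blast
  then have mem: "card (K A) \<in> ?S" by force
  show ?thesis unfolding reg_height_def by (rule Max_eqI[OF fin bound mem])
qed

lemma D_Int: "D Y \<Longrightarrow> D Z \<Longrightarrow> D (Y \<inter> Z)" unfolding D_def by blast
lemma D_empty: "D {}" unfolding D_def using exists_term by blast
lemma K_empty: "K {} = {}" by (simp add: K_def)

lemma K_Int: assumes "D Y" "D Z" shows "K (Y\<inter>Z) = K Y \<inter> K Z"
proof
  show "K (Y\<inter>Z) \<subseteq> K Y \<inter> K Z" using K_mono[of "Y\<inter>Z" Y] K_mono[of "Y\<inter>Z" Z] by blast
  show "K Y \<inter> K Z \<subseteq> K (Y\<inter>Z)"
  proof
    fix c assume "c \<in> K Y \<inter> K Z"
    then obtain a b where a: "a\<in>Y" "a\<in>Term" "c = Rs a" and b: "b\<in>Z" "b\<in>Term" "c = Rs b"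
      unfolding K_def by blast
    have "a\<in>Rs a" using term_refl[OF a(2)] by (simp add: Rs_eq)
    then have "a \<in> Rs b" using a(3) b(3) by simp
    then have "(b,a)\<in>R" by (simp add: Rs_eq)
    then have "a\<in>Z" by (rule D_inv[OF assms(2) b(2) b(1)])
    then show "c \<in> K (Y\<inter>Z)" using a unfolding K_def by blast
  qed
qed

lemma join: assumes "D Y" "D Z" shows "\<exists>W. D W \<and> Y \<union> Z \<subseteq> W \<and> K W = K Y \<union> K Z"
proof -
  define W where "W = {x\<in>U. \<forall>t\<in>Term. (x,t)\<in>R \<longrightarrow> t\<in>Y \<or> t\<in>Z}"
  have WU: "W \<subseteq> U" unfolding W_def by blast
  have Wmem: "x\<in>W \<longleftrightarrow> (\<forall>t\<in>Term. (x,t)\<in>R \<longrightarrow> t\<in>W)" if xU: "x\<in>U" for x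
  proof
    assume xW: "x\<in>W"
    show "\<forall>t\<in>Term. (x,t)\<in>R \<longrightarrow> t\<in>W"
    proof (intro ballI impI)
      fix t assume t: "t\<in>Term" "(x,t)\<in>R"
      have tU: "t\<in>U" using t(1) by (simp add: Term_def)
      have "t'\<in>Y \<or> t'\<in>Z" if "t'\<in>Term" "(t,t')\<in>R" for t'
        using xW trE[OF t(2) that(2)] that(1) unfolding W_def by blast
      then show "t\<in>W" using tU unfolding W_def by blast
    qed
  next
    assume h: "\<forall>t\<in>Term. (x,t)\<in>R \<longrightarrow> t\<in>W"
    have "t\<in>Y \<or> t\<in>Z" if "t\<in>Term" "(x,t)\<in>R" for t
    proof -
      have "t\<in>W" using h that by blast
      then show ?thesis using that(1) term_refl[OF that(1)] unfolding W_def by blast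
    qed
    then show "x\<in>W" using xU unfolding W_def by blast
  qed
  have DW: "D W" unfolding D_def using WU Wmem by blast
  have YW: "Y \<subseteq> W"
  proof
    fix x assume x: "x\<in>Y"
    have xU: "x\<in>U" using x D_sub[OF assms(1)] by blast
    show "x\<in>W" using D_mem[OF assms(1) xU] x xU unfolding W_def by blast
  qed
  have ZW: "Z \<subseteq> W"
  proof
    fix x assume x: "x\<in>Z"
    have xU: "x\<in>U" using x D_sub[OF assms(2)] by blast
    show "x\<in>W" using D_mem[OF assms(2) xU] x xU unfolding W_def by blast
  qed
  have eq: "W \<inter> Term = (Y \<union> Z) \<inter> Term"
  proof
    show "W \<inter> Term \<subseteq> (Y \<union> Z) \<inter> Term" using term_refl unfolding W_def by blast
    show "(Y \<union> Z) \<inter> Term \<subseteq> W \<inter> Term" using YW ZW by blast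
  qed
  have "K W = K Y \<union> K Z" unfolding K_def eq by blast
  then show ?thesis using DW YW ZW by blast
qed

lemma submod: assumes "D Y" "D Z"
  shows "\<exists>W. D W \<and> Y \<union> Z \<subseteq> W \<and> reg_height U R W + reg_height U R (Y \<inter> Z) = reg_height U R Y + reg_height U R Z"
proof -
  obtain W where W: "D W" "Y \<union> Z \<subseteq> W" "K W = K Y \<union> K Z" using join[OF assms] by blast
  have "card (K Y) + card (K Z) = card (K Y \<union> K Z) + card (K Y \<inter> K Z)"
    by (rule card_Un_Int[OF finK finK])
  then have "reg_height U R W + reg_height U R (Y \<inter> Z) = reg_height U R Y + reg_height U R Z"
    using height[OF W(1)] height[OF D_Int[OF assms]] height[OF assms(1)] height[OF assms(2)]
      W(3) K_Int[OF assms] by simp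
  then show ?thesis using W by blast
qed

lemma main: assumes "finite X" "X \<subseteq> U"
  shows "\<exists>I Y. I \<subseteq> X \<and> I \<in> reg_indep U R \<and> D Y \<and> reg_height U R Y + card (X - Y) \<le> card I"
  using assms
proof (induction X rule: finite_psubset_induct)
  case (psubset X)
  show ?case
  proof (cases "X \<in> reg_indep U R")
    case True
    have "reg_height U R {} = 0" using height[OF D_empty] K_empty by simp
    then show ?thesis using True D_empty by (intro exI[of _ X] exI[of _ "{}"]) simp
  next
    case False
    then obtain Y where "Y \<in> Reg U R" "reg_height U R Y < card (X\<inter>Y)"
      using psubset.prems unfolding reg_indep_def by force
    then obtain Y0 where Y0: "Y0\<in>Reg U R \<and> reg_height U R Y0 < card (X\<inter>Y0)"
      and Y0min: "\<And>Y'. Y'\<in>Reg U R \<and> reg_height U R Y' < card (X\<inter>Y') \<Longrightarrow> card Y0 \<le> card Y'"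
      using ex_has_least_nat[of "\<lambda>Y. Y\<in>Reg U R \<and> reg_height U R Y < card (X\<inter>Y)" Y card] by blast
    have DY0: "D Y0" using conjunct1[OF Y0] by (simp only: reg_iff)
    have Y0U: "Y0 \<subseteq> U" using D_sub[OF DY0] .
    have "card (X \<inter> Y0) \<noteq> 0" using Y0 by linarith
    then have "X \<inter> Y0 \<noteq> {}" by (metis card.empty)
    then obtain x where x: "x\<in>X" "x\<in>Y0" by blast
    have s1: "X - {x} \<subset> X" using x by blast
    have s2: "X - {x} \<subseteq> U" using psubset.prems by blast
    obtain I Z where IZ: "I \<subseteq> X - {x}" "I \<in> reg_indep U R" "D Z"
      "reg_height U R Z + card (X - {x} - Z) \<le> card I"
      using psubset.IH[OF s1 s2] by (elim exE conjE)
    show ?thesis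
    proof (cases "x \<in> Z")
      case True
      then have "X - {x} - Z = X - Z" by blast
      then have "reg_height U R Z + card (X - Z) \<le> card I" using IZ(4) by simp
      moreover have "I \<subseteq> X" using IZ(1) by blast
      ultimately show ?thesis using IZ(2,3) by blast
    next
      case False
      have DM: "D (Z \<inter> Y0)" by (rule D_Int[OF IZ(3) DY0])
      have "Z \<inter> Y0 \<subset> Y0" using False x by blast
      then have "card (Z \<inter> Y0) < card Y0" using psubset_card_mono finite_subset[OF Y0U finU] by blast
      then have "\<not> (Z \<inter> Y0 \<in> Reg U R \<and> reg_height U R (Z \<inter> Y0) < card (X\<inter>(Z \<inter> Y0)))"
        using Y0min by force
      moreover have "Z \<inter> Y0 \<in> Reg U R" using DM by (simp only: reg_iff)
      ultimately have a5: "card (X \<inter> (Z \<inter> Y0)) \<le> reg_height U R (Z \<inter> Y0)" by linarith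
      obtain W where W: "D W" "Z \<union> Y0 \<subseteq> W"
        "reg_height U R W + reg_height U R (Z \<inter> Y0) = reg_height U R Z + reg_height U R Y0"
        using submod[OF IZ(3) DY0] by blast
      have finX: "finite X" by fact
      have a1: "card (X - W) \<le> card (X - (Z \<union> Y0))"
        using W(2) finX by (intro card_mono) auto
      have e2: "X - Z = (X - (Z \<union> Y0)) \<union> ((X \<inter> Y0) - Z)" by blast
      have a2: "card (X - Z) = card (X - (Z \<union> Y0)) + card ((X \<inter> Y0) - Z)"
        unfolding e2 by (rule card_Un_disjoint) (use finX in auto)
      have e3: "X \<inter> Y0 = (X \<inter> (Z \<inter> Y0)) \<union> ((X \<inter> Y0) - Z)" by blast
      have a3: "card (X \<inter> Y0) = card (X \<inter> (Z \<inter> Y0)) + card ((X \<inter> Y0) - Z)"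
        by (subst e3, rule card_Un_disjoint) (use finX in auto)
      have a4: "reg_height U R Y0 < card (X \<inter> Y0)" using Y0 by blast
      have "X - {x} - Z = (X - Z) - {x}" by blast
      moreover have "x \<in> X - Z" using x False by blast
      moreover have "card (X - Z - {x}) = card (X - Z) - 1"
        using \<open>x \<in> X - Z\<close> by (rule card_Diff_singleton)
      moreover have "card (X - Z) > 0"
        using \<open>x \<in> X - Z\<close> finX by (auto simp: card_gt_0_iff)
      ultimately have a7: "card (X - {x} - Z) + 1 = card (X - Z)"
        by simp
      have "reg_height U R W + card (X - W) \<le> card I"
        using a1 a2 a3 a4 a5 a7 W(3) IZ(4) by linarith
      then show ?thesis using IZ W(1) by (intro exI[of _ I] exI[of _ W]) blast
    qed
  qed
qed

end

theorem proposition3: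
  fixes U :: "'a set" and R :: "('a \<times> 'a) set" and X :: "'a set"
  assumes "finite U" and "U \<noteq> {}" and "R \<subseteq> U \<times> U"
    and "serial_on U R" and "trans R"
    and "X \<subseteq> U"
  shows "reg_rank U R X = Min {reg_height U R Y + card (X - Y) | Y. Y \<in> Reg U R}"
proof -
  interpret ctx U R using assms by unfold_locales auto
  let ?S1 = "{card I | I. I \<subseteq> X \<and> I \<in> reg_indep U R}"
  let ?S2 = "{reg_height U R Y + card (X - Y) | Y. Y \<in> Reg U R}"
  have finX: "finite X" using assms(1,6) finite_subset by blast
  have fin1: "finite ?S1"
    by (rule finite_subset[of _ "card ` Pow X"]) (auto simp: finX)
  have "Reg U R \<subseteq> Pow U"
  proof
    fix Y assume "Y \<in> Reg U R" then have "D Y" by (simp only: reg_iff)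
    then show "Y \<in> Pow U" using D_sub by blast
  qed
  then have "finite (Reg U R)" using assms(1) finite_subset by blast
  moreover have "?S2 = (\<lambda>Y. reg_height U R Y + card (X - Y)) ` Reg U R" by blast
  ultimately have fin2: "finite ?S2" by simp
  have e1: "{} \<subseteq> X \<and> {} \<in> reg_indep U R" unfolding reg_indep_def by simp
  have ne1: "?S1 \<noteq> {}" using e1 by blast
  have "{} \<in> Reg U R" using D_empty by (simp only: reg_iff)
  then have ne2: "?S2 \<noteq> {}" by blast
  have le: "Max ?S1 \<le> Min ?S2"
  proof -
    obtain I where I: "I\<subseteq>X" "I \<in> reg_indep U R" "Max ?S1 = card I" using Max_in[OF fin1 ne1] by blast
    obtain Y where Y: "Y\<in>Reg U R" "Min ?S2 = reg_height U R Y + card (X-Y)" using Min_in[OF fin2 ne2] by blast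
    have finI: "finite I" using I(1) finX finite_subset by blast
    have "card (I \<inter> Y) \<le> reg_height U R Y" using I(2) Y(1) unfolding reg_indep_def by blast
    moreover have "card I = card (I\<inter>Y) + card (I - Y)"
    proof -
      have e: "I = (I \<inter> Y) \<union> (I - Y)" by blast
      show ?thesis by (subst e, rule card_Un_disjoint) (use finI in auto)
    qed
    moreover have "card (I - Y) \<le> card (X - Y)" using I(1) finX by (intro card_mono) auto
    ultimately show ?thesis using I(3) Y(2) by linarith
  qed
  have ge: "Min ?S2 \<le> Max ?S1"
  proof -
    obtain I Y where IY: "I \<subseteq> X" "I \<in> reg_indep U R" "D Y" "reg_height U R Y + card (X - Y) \<le> card I"
      using main[OF finX assms(6)] by blast
    have "Y \<in> Reg U R" using IY(3) by (simp only: reg_iff)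
    then have "Min ?S2 \<le> reg_height U R Y + card (X - Y)" by (intro Min_le[OF fin2]) blast
    moreover have "card I \<le> Max ?S1" using IY(1,2) by (intro Max_ge[OF fin1]) blast
    ultimately show ?thesis using IY(4) by linarith
  qed
  show ?thesis unfolding reg_rank_def using le ge by linarith
qed

end
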